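(* Let $L$ be a finite list, $g: L\to\{0,1\}$ a Boolean function and $\epsilon > 0$, and let $c_q$ be the number of queries to $g$ required to implement the oracle $\mathcal{O}_g|x\rangle|0\rangle = |x\rangle|g(x)\rangle$. Then, with probability of failure at most $\epsilon$, the algorithm $\textbf{QSearch}_{\text{Zalka}}$ requires at most $$W_{\textbf{QSearch}_{\text{Zalka}}}(|L|,\epsilon) := c_q\left(5\left\lceil \frac{\ln(1/\epsilon)}{2\ln(4/3)}\right\rceil + \pi\sqrt{|L|}\sqrt{\left\lceil \frac{\ln(1/\epsilon)}{2\ln(4/3)}\right\rceil}\right)$$ queries to $g$ to find a marked item of $L$ (an $x$ with $g(x)=1$), or otherwise to report that there is none.
   Context: Each use of $\mathcal{O}_g$ counts as $c_q$ queries to $g$. A Grover iteration is the unitary reflecting through the unmarked states (one query to $\mathcal{O}_g$) followed by a reflection through the uniform superposition over $L$; a Grover run with $j$ iterations prepares the uniform superposition, applies $j$ Grover iterations, measures, and checks the outcome with one further query. Exact Grover search for a known number $t>0$ of marked items is a procedure that, when $L$ has exactly $t$ marked items, returns a marked item with certainty using $\lfloor \frac{\pi}{4}\sqrt{|L|/t} - \frac12 \rceil + 1$ queries to $\mathcal{O}_g$ (where $\lfloor\cdot\rceil$ is the nearest integer). Algorithm $\textbf{QSearch}_{\text{Zalka}}$ with target failure probability $\epsilon$: let $t_0 = \lceil \frac{\ln\epsilon}{2\ln(3/4)}\rceil$. Step 1: for $t = 1, 2, \dots, t_0$, run exact Grover search assuming exactly $t$ marked items; if a marked item is found, return it and stop.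 Step 2: repeat $2t_0$ times: choose an integer $j$ uniformly at random from $[0, \lceil \frac{\pi}{4}\sqrt{|L|/t_0}\rceil]$ and perform a Grover run with $j$ iterations; if a marked item is found, return it and stop. If nothing is found, return "no marked item". *)

theory Defs
  imports "HOL-Probability.Probability"
begin

text \<open>A state is an amplitude vector indexed by the elements of L (a function
'a => complex, supported on L).  The uniform superposition over L:\<close>
definition unif_state :: "'a set \<Rightarrow> 'a \<Rightarrow> complex" where
  "unif_state L = (\<lambda>x. if x \<in> L then complex_of_real (1 / sqrt (real (card L))) else 0)"

text \<open>Reflection through the unmarked states (one use of the oracle O_g):
unmarked amplitudes are kept, marked amplitudes change sign.\<close>
definition refl_unmarked :: "('a \<Rightarrow> bool) \<Rightarrow> ('a \<Rightarrow> complex) \<Rightarrow> 'a \<Rightarrow> complex" where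
  "refl_unmarked g v = (\<lambda>x. if g x then - v x else v x)"

definition refl_unif :: "'a set \<Rightarrow> ('a \<Rightarrow> complex) \<Rightarrow> 'a \<Rightarrow> complex" where
  "refl_unif L v = (let u = unif_state L; ip = (\<Sum>y\<in>L. cnj (u y) * v y)
                    in (\<lambda>x. 2 * ip * u x - v x))"

definition grover_iter :: "'a set \<Rightarrow> ('a \<Rightarrow> bool) \<Rightarrow> ('a \<Rightarrow> complex) \<Rightarrow> 'a \<Rightarrow> complex" where
  "grover_iter L g v = refl_unif L (refl_unmarked g v)"

definition measure_state :: "'a set \<Rightarrow> ('a \<Rightarrow> complex) \<Rightarrow> 'a pmf" where
  "measure_state L v = embed_pmf (\<lambda>x. if x \<in> L then (cmod (v x))^2 else 0)"

text \<open>A Grover run with j iterations: prepare the uniform superposition, apply j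
Grover iterations, measure, check the outcome with one further query.  Result:
(found item or None, number of uses of O_g) = j + 1 uses.\<close>
definition grover_run :: "'a set \<Rightarrow> ('a \<Rightarrow> bool) \<Rightarrow> nat \<Rightarrow> ('a option \<times> real) pmf" where
  "grover_run L g j =
     map_pmf (\<lambda>x. (if x \<in> L \<and> g x then Some x else None, real j + 1))
       (measure_state L ((grover_iter L g ^^ j) (unif_state L)))"

text \<open>Number of uses of O_g of exact Grover search assuming t marked items.\<close>
definition exact_cost :: "'a set \<Rightarrow> nat \<Rightarrow> real" where
  "exact_cost L t = real_of_int (round (pi / 4 * sqrt (real (card L) / real t) - 1 / 2)) + 1"

definition zalka_t0 :: "real \<Rightarrow> nat" where
  "zalka_t0 \<epsilon> = nat \<lceil>ln \<epsilon> / (2 * ln (3 / 4))\<rceil>"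

definition add_cost :: "real \<Rightarrow> ('a option \<times> real) \<Rightarrow> ('a option \<times> real)" where
  "add_cost c = (\<lambda>(r, c'). (r, c + c'))"

fun zalka_step2 :: "'a set \<Rightarrow> ('a \<Rightarrow> bool) \<Rightarrow> nat \<Rightarrow> nat \<Rightarrow> ('a option \<times> real) pmf" where
  "zalka_step2 L g t0 0 = return_pmf (None, 0)"
| "zalka_step2 L g t0 (Suc k) =
     bind_pmf (pmf_of_set {0 .. nat \<lceil>pi / 4 * sqrt (real (card L) / real t0)\<rceil>}) (\<lambda>j.
     bind_pmf (grover_run L g j) (\<lambda>(r, c).
       if r \<noteq> None then return_pmf (r, c)
       else map_pmf (add_cost c) (zalka_step2 L g t0 k)))"

text \<open>Step 1: exact Grover searches for t in the given list; EG t is the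
(arbitrary) output distribution of exact Grover search assuming t marked items;
its outcome is checked (the check is part of its query count).\<close>
fun zalka_step1 :: "(nat \<Rightarrow> 'a pmf) \<Rightarrow> 'a set \<Rightarrow> ('a \<Rightarrow> bool) \<Rightarrow> nat list
                     \<Rightarrow> ('a option \<times> real) pmf \<Rightarrow> ('a option \<times> real) pmf" where
  "zalka_step1 EG L g [] rest = rest"
| "zalka_step1 EG L g (t # ts) rest =
     bind_pmf (EG t) (\<lambda>x.
       if x \<in> L \<and> g x then return_pmf (Some x, exact_cost L t)
       else map_pmf (add_cost (exact_cost L t)) (zalka_step1 EG L g ts rest))"

definition qsearch_zalka :: "(nat \<Rightarrow> 'a pmf) \<Rightarrow> 'a set \<Rightarrow> ('a \<Rightarrow> bool) \<Rightarrow> real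
                              \<Rightarrow> ('a option \<times> real) pmf" where
  "qsearch_zalka EG L g \<epsilon> =
     (let t0 = zalka_t0 \<epsilon>
      in zalka_step1 EG L g [1 ..< t0 + 1] (zalka_step2 L g t0 (2 * t0)))"

definition search_correct :: "'a set \<Rightarrow> ('a \<Rightarrow> bool) \<Rightarrow> 'a option \<Rightarrow> bool" where
  "search_correct L g r = (case r of None \<Rightarrow> \<not> (\<exists>x\<in>L. g x) | Some x \<Rightarrow> x \<in> L \<and> g x)"

definition W_zalka :: "real \<Rightarrow> nat \<Rightarrow> real \<Rightarrow> real" where
  "W_zalka cq n \<epsilon> =
     (let T = real (nat \<lceil>ln (1 / \<epsilon>) / (2 * ln (4 / 3))\<rceil>)
      in cq * (5 * T + pi * sqrt (real n) * sqrt T))"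

end

theory Submission
  imports Defs
begin

lemma cos_sum_tel: "(\<Sum>j<m. cos ((2*real j+1) * x)) * (2 * sin x) = sin (2 * real m * x)"
proof (induction m)
  case 0 then show ?case by simp
next
  case (Suc m)
  have "sin (2 * real (Suc m) * x) - sin (2 * real m * x) = 2 * sin x * cos ((2*real m+1) * x)"
    using sin_diff_sin[of "2 * real (Suc m) * x" "2 * real m * x"]
    by (simp add: algebra_simps add_divide_distrib)
  then show ?case using Suc by (simp add: algebra_simps)
qed

lemma cos2_sum_le:
  assumes "0 < x" "x < pi" "sin (2 * real m * x) \<le> real m * sin x"
  shows "(\<Sum>j<m. (cos ((2*real j+1) * (x/2)))^2) \<le> 3/4 * real m"
proof -
  have sx: "sin x > 0" using assms sin_gt_zero by auto
  have "(\<Sum>j<m. (cos ((2*real j+1) * (x/2)))^2) = (\<Sum>j<m. (1 + cos ((2*real j+1) * x))/2)"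
  proof (rule sum.cong)
    fix j assume "j \<in> {..<m}"
    have "cos ((2*real j+1) * x) = cos (2 * ((2*real j+1) * (x/2)))" by (simp add: algebra_simps)
    also have "\<dots> = 2 * (cos ((2*real j+1) * (x/2)))^2 - 1" by (rule cos_double_cos)
    finally show "(cos ((2*real j+1) * (x/2)))^2 = (1 + cos ((2*real j+1) * x))/2" by simp
  qed simp
  also have "\<dots> = real m / 2 + (\<Sum>j<m. cos ((2*real j+1) * x)) / 2"
    by (simp add: sum.distrib add_divide_distrib sum_divide_distrib)
  also have "(\<Sum>j<m. cos ((2*real j+1) * x)) = sin (2 * real m * x) / (2 * sin x)"
    using cos_sum_tel[where m=m and x=x] sx by (simp add: field_simps)
  also have "\<dots> \<le> real m / 2" using assms(3) sx by (simp add: field_simps)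
  finally show ?thesis by simp
qed

lemma sin_ge_cubic: "sin z \<ge> z - \<bar>z\<bar>^3/6" for z :: real
proof -
  have "\<bar>sin z - (\<Sum>m<3. sin_coeff m * z ^ m)\<bar> \<le> inverse (fact 3) * \<bar>z\<bar> ^ 3"
    by (rule Maclaurin_sin_bound)
  moreover have "(\<Sum>m<3. sin_coeff m * z ^ m) = z"
    by (simp add: numeral_3_eq_3 sin_coeff_def)
  moreover have "(fact 3::real) = 6" by (simp add: numeral_3_eq_3)
  ultimately have "6 * \<bar>sin z - z\<bar> \<le> \<bar>z\<bar>^3" by (simp add: field_simps)
  moreover have "z - sin z \<le> \<bar>sin z - z\<bar>" by arith
  ultimately have "6 * (z - sin z) \<le> \<bar>z\<bar>^3" by argo
  thus ?thesis by (simp add: field_simps)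
qed

lemma m_sin_ge1:
  assumes "m \<ge> 2"
  shows "real m * sin (pi / (2 * real m)) \<ge> 1"
proof -
  define z where "z = pi / (2 * real m)"
  have z0: "z > 0" using assms by (simp add: z_def)
  have zle: "z \<le> pi / 4" using assms unfolding z_def by (simp add: field_simps)
  have mz: "real m * z = pi / 2" using assms by (simp add: z_def)
  have "sin z \<ge> z - z^3/6" using sin_ge_cubic[of z] z0 by simp
  hence "real m * sin z \<ge> real m * (z - z^3/6)"
    using assms by (intro mult_left_mono) auto
  hence "real m * sin z \<ge> real m * z - (real m * z) * z^2/6"
    by (simp add: power3_eq_cube power2_eq_square algebra_simps)
  also have "real m * z - (real m * z) * z^2/6 = pi/2 - pi/12 * z^2" unfolding mz by (simp add: field_simps)
  also have "z^2 \<le> (pi/4)^2" using zle z0 by (intro power_mono) auto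
  hence "pi/2 - pi/12 * z^2 \<ge> pi/2 - pi/12 * (pi/4)^2" by (simp add: mult_left_mono)
  moreover have "pi/2 - pi/12 * (pi/4)^2 \<ge> 1"
  proof -
    have "pi^3 \<le> 3.15^3" using pi_less_4 pi_approx by (intro power_mono) (auto simp: pi_gt3)
    thus ?thesis using pi_gt3 by (simp add: power3_eq_cube power2_eq_square)
  qed
  ultimately show ?thesis unfolding z_def by linarith
qed

lemma sin_ineq_big:
  assumes "pi/2 \<le> x" "x < pi" "m \<ge> 1"
  shows "sin (2 * real m * x) \<le> real m * sin x"
proof -
  define y where "y = pi - x"
  have y: "0 < y" "y \<le> pi/2" using assms by (auto simp: y_def)
  have sx: "sin x = sin y" by (simp add: y_def)
  have "sin (2 * real m * x) = sin (real (2*m) * pi - 2 * real m * y)"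
    by (simp add: y_def algebra_simps)
  also have "\<dots> = - sin (2 * real m * y)"
    by (simp add: sin_diff)
  finally have e: "sin (2 * real m * x) = - sin (2 * real m * y)" .
  have sy: "sin y \<ge> 0" using y by (intro sin_ge_zero) auto
  show ?thesis
  proof (cases "2 * real m * y \<le> pi")
    case True
    hence "sin (2 * real m * y) \<ge> 0" using y assms by (intro sin_ge_zero) auto
    moreover have "real m * sin y \<ge> 0" using sy by simp
    ultimately show ?thesis using e sx by simp
  next
    case False
    have m2: "m \<ge> 2"
    proof (rule ccontr)
      assume "\<not> m \<ge> 2" hence "m = 1" using assms by auto
      thus False using False y by simp
    qed
    have zy: "pi / (2 * real m) \<le> y" using False m2 by (simp add: field_simps)
    have "sin (pi / (2 * real m)) \<le> sin y"
      using zy y m2 by (subst sin_mono_le_eq) (auto simp: field_simps intro: order_trans[of _ 0])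
    hence "real m * sin (pi / (2 * real m)) \<le> real m * sin y" by (simp add: mult_left_mono)
    hence "1 \<le> real m * sin y" using m_sin_ge1[OF m2] by linarith
    moreover have "- sin (2 * real m * y) \<le> 1" by simp
    moreover have "real m * sin x = real m * sin y" using sx by simp
    ultimately show ?thesis using e by argo
  qed
qed

definition Sr :: "'a set \<Rightarrow> ('a\<Rightarrow>bool) \<Rightarrow> real \<Rightarrow> real \<Rightarrow> real \<Rightarrow> 'a \<Rightarrow> complex" where
  "Sr L g a b \<phi> = (\<lambda>x. if x \<in> L then (if g x then complex_of_real (sin \<phi> / a)
                                     else complex_of_real (cos \<phi> / b)) else 0)"

lemma sum_if_card:
  assumes "finite L"
  shows "(\<Sum>y\<in>L. if g y then A else B) = of_nat (card {x\<in>L. g x}) * A + of_nat (card {x\<in>L. \<not> g x}) * (B::'b::comm_semiring_1)"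
proof -
  have "(\<Sum>y\<in>L. if g y then A else B) = sum (\<lambda>_. A) (L \<inter> {x. g x}) + sum (\<lambda>_. B) (L \<inter> - {x. g x})"
    using assms by (rule sum.If_cases)
  moreover have "L \<inter> {x. g x} = {x\<in>L. g x}" "L \<inter> - {x. g x} = {x\<in>L. \<not> g x}" by auto
  ultimately show ?thesis by simp
qed

lemma card_split:
  assumes "finite L"
  shows "card L = card {x\<in>L. g x} + card {x\<in>L. \<not> g x}"
proof -
  have "L = {x\<in>L. g x} \<union> {x\<in>L. \<not> g x}" by auto
  hence "card L = card ({x\<in>L. g x} \<union> {x\<in>L. \<not> g x})" by simp
  also have "\<dots> = card {x\<in>L. g x} + card {x\<in>L. \<not> g x}"
    using assms by (intro card_Un_disjoint) auto
  finally show ?thesis .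
qed

lemma sq_div: "(x::real) ^ 2 * (c / x) = x * c"
  by (cases "x = 0") (simp_all add: power2_eq_square)

lemma grover_step:
  assumes fin: "finite L" and t: "t = card {x\<in>L. g x}" and u: "u = card {x\<in>L. \<not> g x}"
    and tpos: "t > 0" and a: "a = sqrt (real t)" and b: "b = sqrt (real u)"
    and n: "n = sqrt (real t + real u)" and th: "\<theta> = arcsin (a / n)"
  shows "grover_iter L g (Sr L g a b \<phi>) = Sr L g a b (\<phi> + 2 * \<theta>)"
proof -
  have cL: "real (card L) = real t + real u" using card_split[OF fin, of g] t u by simp
  have apos: "a > 0" using a tpos by simp
  have b0: "b \<ge> 0" using b by simp
  have npos: "n > 0" using n tpos by simp
  have a2: "a^2 = real t" using a by simp
  have b2: "b^2 = real u" using b by simp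
  have n2: "n^2 = a^2 + b^2" using n a2 b2 by simp
  have an: "a / n \<le> 1" using n a npos by (simp add: real_sqrt_le_mono)
  have an0: "a / n \<ge> 0" using apos npos by simp
  have sth: "sin \<theta> = a / n" using th an an0 by simp
  have cth: "cos \<theta> = b / n"
  proof -
    have "cos \<theta> = sqrt (1 - (a/n)^2)" using th an an0 by (simp add: cos_arcsin)
    also have "1 - (a/n)^2 = (b/n)^2"
    proof -
      have "a^2 + b^2 > 0" using apos by (simp add: add_pos_nonneg)
      hence "a^2 / (a^2 + b^2) + b^2 / (a^2 + b^2) = 1" by (metis add_divide_distrib less_irrefl divide_self)
      thus ?thesis using n2 by (simp add: field_simps power_divide)
    qed
    also have "sqrt ((b/n)^2) = b/n" using b0 npos by simp
    finally show ?thesis .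
  qed
  have s2: "sin (2*\<theta>) = 2*a*b/n^2" using sth cth by (simp add: sin_double power2_eq_square)
  have c2a: "cos (2*\<theta>) = 1 - 2*(a/n)^2" using sth by (simp add: cos_double_sin)
  have c2b: "cos (2*\<theta>) = 2*(b/n)^2 - 1" using cth by (simp add: cos_double_cos)
  define R where "R = (- a * sin \<phi> + b * cos \<phi>) / n"
  have sqL: "sqrt (real (card L)) = n" using cL n by simp
  have ip: "(\<Sum>y\<in>L. cnj (unif_state L y) * refl_unmarked g (Sr L g a b \<phi>) y) = complex_of_real R"
  proof -
    have "(\<Sum>y\<in>L. cnj (unif_state L y) * refl_unmarked g (Sr L g a b \<phi>) y)
       = (\<Sum>y\<in>L. if g y then complex_of_real (- (1/n) * (sin \<phi> / a)) else complex_of_real ((1/n) * (cos \<phi> / b)))"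
      by (rule sum.cong) (auto simp: unif_state_def refl_unmarked_def Sr_def sqL)
    also have "\<dots> = complex_of_real (real t * (- (1/n) * (sin \<phi> / a)) + real u * ((1/n) * (cos \<phi> / b)))"
      unfolding sum_if_card[OF fin] using t u by simp
    also have "real t * (- (1/n) * (sin \<phi> / a)) + real u * ((1/n) * (cos \<phi> / b)) = R"
    proof -
      have "real t * (- (1/n) * (sin \<phi> / a)) = - (a^2 * (sin \<phi> / a)) / n" using a2 by simp
      also have "\<dots> = - (a * sin \<phi>) / n" by (simp only: sq_div)
      finally have 1: "real t * (- (1/n) * (sin \<phi> / a)) = - (a * sin \<phi>) / n" .
      have "real u * ((1/n) * (cos \<phi> / b)) = (b^2 * (cos \<phi> / b)) / n" using b2 by simp
      also have "\<dots> = (b * cos \<phi>) / n" by (simp only: sq_div)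
      finally have 2: "real u * ((1/n) * (cos \<phi> / b)) = (b * cos \<phi>) / n" .
      show ?thesis unfolding 1 2 R_def by (simp add: diff_divide_distrib)
    qed
    finally show ?thesis .
  qed
  show ?thesis
  proof
    fix x
    show "grover_iter L g (Sr L g a b \<phi>) x = Sr L g a b (\<phi> + 2 * \<theta>) x"
    proof (cases "x \<in> L")
      case False thus ?thesis
        by (simp only: grover_iter_def refl_unif_def Let_def ip) (simp add: unif_state_def refl_unmarked_def Sr_def)
    next
      case xL: True
      show ?thesis
      proof (cases "g x")
        case True
        have "2 * R * (1/n) + sin \<phi> / a = sin (\<phi> + 2 * \<theta>) / a"
          unfolding sin_add s2 c2a R_def using apos npos
          by (simp add: field_simps power2_eq_square)
        hence "complex_of_real (2 * R * (1/n) + sin \<phi> / a) = complex_of_real (sin (\<phi> + 2 * \<theta>) / a)"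
          by simp
        thus ?thesis using xL True
          by (simp only: grover_iter_def refl_unif_def Let_def ip) (simp add: unif_state_def refl_unmarked_def Sr_def sqL)
      next
        case False
        have bpos: "b > 0"
        proof -
          have "x \<in> {x\<in>L. \<not> g x}" using xL False by simp
          hence "u > 0" using u fin by (metis (no_types, lifting) card_gt_0_iff empty_iff finite_subset mem_Collect_eq subsetI)
          thus ?thesis using b by simp
        qed
        have "2 * R * (1/n) - cos \<phi> / b = cos (\<phi> + 2 * \<theta>) / b"
          unfolding cos_add s2 c2b R_def using bpos npos
          by (simp add: field_simps power2_eq_square)
        hence "complex_of_real (2 * R * (1/n) - cos \<phi> / b) = complex_of_real (cos (\<phi> + 2 * \<theta>) / b)"
          by simp
        thus ?thesis using xL False
          by (simp only: grover_iter_def refl_unif_def Let_def ip) (simp add: unif_state_def refl_unmarked_def Sr_def sqL)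
      qed
    qed
  qed
qed

lemma measure_state_prob:
  assumes fin: "finite L" and norm: "(\<Sum>x\<in>L. (cmod (v x))^2) = 1"
  shows "measure_pmf.prob (measure_state L v) A = (\<Sum>x\<in>L\<inter>A. (cmod (v x))^2)"
proof -
  define f where "f = (\<lambda>x. if x \<in> L then (cmod (v x))^2 else 0)"
  have nn: "\<And>x. 0 \<le> f x" by (simp add: f_def)
  have "(\<integral>\<^sup>+x. ennreal (f x) \<partial>count_space UNIV) = (\<Sum>x\<in>L. ennreal (f x))"
    using fin by (intro nn_integral_count_space') (auto simp: f_def)
  also have "\<dots> = ennreal (\<Sum>x\<in>L. f x)" using nn by simp
  also have "(\<Sum>x\<in>L. f x) = 1" using norm by (simp add: f_def)
  finally have pr: "(\<integral>\<^sup>+x. ennreal (f x) \<partial>count_space UNIV) = 1" by simp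
  have ms: "measure_state L v = embed_pmf f" by (simp add: measure_state_def f_def)
  have pmfe: "pmf (measure_state L v) x = f x" for x
    unfolding ms by (rule pmf_embed_pmf[OF nn pr])
  have setp: "set_pmf (measure_state L v) \<subseteq> L"
    unfolding ms set_embed_pmf[OF nn pr] by (auto simp: f_def)
  let ?p = "measure_state L v"
  have "measure_pmf.prob ?p A = measure_pmf.prob ?p (A \<inter> set_pmf ?p)"
    by (simp add: measure_Int_set_pmf)
  also have "A \<inter> set_pmf ?p = (L \<inter> A) \<inter> set_pmf ?p" using setp by auto
  also have "measure_pmf.prob ?p \<dots> = measure_pmf.prob ?p (L \<inter> A)"
    by (simp add: measure_Int_set_pmf)
  also have "\<dots> = (\<Sum>x\<in>L\<inter>A. pmf ?p x)" using fin by (simp add: measure_measure_pmf_finite)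
  also have "\<dots> = (\<Sum>x\<in>L\<inter>A. (cmod (v x))^2)" by (rule sum.cong) (auto simp: pmfe f_def)
  finally show ?thesis .
qed

lemma grover_facts:
  assumes fin: "finite L" and t: "t = card {x\<in>L. g x}" and u: "u = card {x\<in>L. \<not> g x}"
    and tpos: "t > 0" and a: "a = sqrt (real t)" and b: "b = sqrt (real u)"
    and n: "n = sqrt (real t + real u)" and th: "\<theta> = arcsin (a / n)"
  shows "sin \<theta> = a / n" "cos \<theta> = b / n" "unif_state L = Sr L g a b \<theta>"
    "(grover_iter L g ^^ j) (unif_state L) = Sr L g a b ((2 * real j + 1) * \<theta>)"
proof -
  have cL: "real (card L) = real t + real u" using card_split[OF fin, of g] t u by simp
  have apos: "a > 0" using a tpos by simp
  have b0: "b \<ge> 0" using b by simp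
  have npos: "n > 0" using n tpos by simp
  have a2: "a^2 = real t" using a by simp
  have b2: "b^2 = real u" using b by simp
  have n2: "n^2 = a^2 + b^2" using n a2 b2 by simp
  have an: "a / n \<le> 1" using n a npos by (simp add: real_sqrt_le_mono)
  have an0: "a / n \<ge> 0" using apos npos by simp
  show sth: "sin \<theta> = a / n" using th an an0 by simp
  show cth: "cos \<theta> = b / n"
  proof -
    have "cos \<theta> = sqrt (1 - (a/n)^2)" using th an an0 by (simp add: cos_arcsin)
    also have "1 - (a/n)^2 = (b/n)^2"
    proof -
      have "a^2 + b^2 > 0" using apos by (simp add: add_pos_nonneg)
      hence "a^2 / (a^2 + b^2) + b^2 / (a^2 + b^2) = 1" by (metis add_divide_distrib less_irrefl divide_self)
      thus ?thesis using n2 by (simp add: field_simps power_divide)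
    qed
    also have "sqrt ((b/n)^2) = b/n" using b0 npos by simp
    finally show ?thesis .
  qed
  have sqL: "sqrt (real (card L)) = n" using cL n by simp
  show us: "unif_state L = Sr L g a b \<theta>"
  proof
    fix x
    show "unif_state L x = Sr L g a b \<theta> x"
    proof (cases "x \<in> L \<and> \<not> g x")
      case True
      have "u > 0"
      proof -
        have "x \<in> {x\<in>L. \<not> g x}" using True by simp
        thus ?thesis using u fin by (metis (no_types, lifting) card_gt_0_iff empty_iff finite_subset mem_Collect_eq subsetI)
      qed
      hence "b > 0" using b by simp
      thus ?thesis using True by (simp add: unif_state_def Sr_def sqL cth)
    next
      case False
      thus ?thesis using apos by (auto simp add: unif_state_def Sr_def sqL sth)
    qed
  qed
  show "(grover_iter L g ^^ j) (unif_state L) = Sr L g a b ((2 * real j + 1) * \<theta>)"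
  proof (induction j)
    case 0 thus ?case using us by simp
  next
    case (Suc j)
    have "(grover_iter L g ^^ Suc j) (unif_state L) = grover_iter L g (Sr L g a b ((2 * real j + 1) * \<theta>))"
      using Suc by simp
    also have "\<dots> = Sr L g a b ((2 * real j + 1) * \<theta> + 2 * \<theta>)"
      by (rule grover_step[OF fin t u tpos a b n th])
    finally show ?case by (simp add: algebra_simps)
  qed
qed

lemma grover_none:
  assumes fin: "finite L" and t: "t = card {x\<in>L. g x}" and u: "u = card {x\<in>L. \<not> g x}"
    and tpos: "t > 0" and a: "a = sqrt (real t)" and b: "b = sqrt (real u)"
    and n: "n = sqrt (real t + real u)" and th: "\<theta> = arcsin (a / n)"
  shows "measure_pmf.prob (grover_run L g j) {(r,c). r = None}
         = (if u = 0 then 0 else (cos ((2*real j+1)*\<theta>))^2)"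
proof -
  note gf = grover_facts[OF fin t u tpos a b n th]
  define \<phi> where "\<phi> = (2*real j+1)*\<theta>"
  define v where "v = Sr L g a b \<phi>"
  have apos: "a > 0" using a tpos by simp
  have a2: "a^2 = real t" using a by simp
  have b2: "b^2 = real u" using b by simp
  have ts: "real t * (sin \<phi> / a)^2 = (sin \<phi>)^2" using apos a2 tpos by (simp add: power_divide)
  have us: "real u * (cos \<phi> / b)^2 = (if u = 0 then 0 else (cos \<phi>)^2)"
    using b2 b by (auto simp add: power_divide)
  have cm: "(\<Sum>x\<in>L. (cmod (v x))^2) = (\<Sum>x\<in>L. if g x then (sin \<phi> / a)^2 else (cos \<phi> / b)^2)"
    by (rule sum.cong) (auto simp: v_def Sr_def power_divide simp del: of_real_divide)
  have norm: "(\<Sum>x\<in>L. (cmod (v x))^2) = 1"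
  proof (cases "u = 0")
    case False
    thus ?thesis unfolding cm sum_if_card[OF fin] using ts us t u by simp
  next
    case True
    hence "n = a" using n a by simp
    hence "\<theta> = pi / 2" using th apos by simp
    hence "\<phi> = real (2*j+1) * (pi/2)" unfolding \<phi>_def by (simp only:) simp
    hence "cos \<phi> = 0" unfolding cos_zero_iff
      by (intro disjI1 exI[of _ "2*j+1"]) auto
    hence "(sin \<phi>)^2 = 1" using sin_cos_squared_add[of \<phi>] by simp
    thus ?thesis unfolding cm sum_if_card[OF fin] using ts us t u True by simp
  qed
  have run: "grover_run L g j = map_pmf (\<lambda>x. (if x \<in> L \<and> g x then Some x else None, real j + 1)) (measure_state L v)"
    unfolding grover_run_def v_def \<phi>_def gf(4) ..
  have pre: "(\<lambda>x. (if x \<in> L \<and> g x then Some x else None, real j + 1)) -` {(r,c). r = None} = {x. \<not> (x \<in> L \<and> g x)}"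
    by auto
  have "measure_pmf.prob (grover_run L g j) {(r,c). r = None} = measure_pmf.prob (measure_state L v) {x. \<not> (x \<in> L \<and> g x)}"
    unfolding run measure_map_pmf pre ..
  also have "\<dots> = (\<Sum>x\<in>L \<inter> {x. \<not> (x \<in> L \<and> g x)}. (cmod (v x))^2)"
    by (rule measure_state_prob[OF fin norm])
  also have "\<dots> = (\<Sum>x\<in>{x\<in>L. \<not> g x}. (cos \<phi> / b)^2)"
    by (rule sum.cong) (auto simp: v_def Sr_def power_divide simp del: of_real_divide)
  also have "\<dots> = real u * (cos \<phi> / b)^2" using u by simp
  finally show ?thesis using us \<phi>_def by simp
qed

lemma avg_none:
  assumes fin: "finite L" and t: "t = card {x\<in>L. g x}" and u: "u = card {x\<in>L. \<not> g x}"
    and t0: "t0 \<ge> 1" "t0 < t"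
    and M: "M = nat \<lceil>pi / 4 * sqrt (real (card L) / real t0)\<rceil>"
  shows "(\<Sum>j\<in>{0..M}. measure_pmf.prob (grover_run L g j) {(r,c). r = None}) \<le> 3/4 * real (M+1)"
proof -
  have tpos: "t > 0" using t0 by simp
  define a where "a = sqrt (real t)"
  define b where "b = sqrt (real u)"
  define n where "n = sqrt (real t + real u)"
  define \<theta> where "\<theta> = arcsin (a / n)"
  note gn = grover_none[OF fin t u tpos a_def b_def n_def \<theta>_def]
  note gf = grover_facts[OF fin t u tpos a_def b_def n_def \<theta>_def]
  show ?thesis
  proof (cases "u = 0")
    case True thus ?thesis using gn by simp
  next
    case False
    hence upos: "u > 0" by simp
    have apos: "a > 0" using tpos by (simp add: a_def)
    have bpos: "b > 0" using upos by (simp add: b_def)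
    have npos: "n > 0" using tpos by (simp add: n_def)
    have a2: "a^2 = real t" by (simp add: a_def)
    have b2: "b^2 = real u" by (simp add: b_def)
    have n2: "n^2 = real t + real u" by (simp add: n_def)
    have an: "a / n \<le> 1" using npos by (simp add: a_def n_def real_sqrt_le_mono)
    have thb: "- (pi/2) \<le> \<theta> \<and> \<theta> \<le> pi/2" unfolding \<theta>_def
    proof (rule arcsin_bounded)
      have "a / n \<ge> 0" using apos npos by simp
      thus "- 1 \<le> a / n" by linarith
    qed (rule an)
    have sth: "sin \<theta> > 0" using gf(1) apos npos by simp
    have cth: "cos \<theta> > 0" using gf(2) bpos npos by simp
    have th0: "\<theta> > 0"
    proof (rule ccontr)
      assume "\<not> \<theta> > 0"
      hence "sin (- \<theta>) \<ge> 0" using thb by (intro sin_ge_zero) auto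
      thus False using sth by simp
    qed
    have th1: "\<theta> < pi/2"
    proof (rule ccontr)
      assume "\<not> \<theta> < pi/2"
      hence "\<theta> = pi/2" using thb by simp
      hence "cos \<theta> = 0" by (simp only: cos_pi_half)
      thus False using cth by simp
    qed
    define x where "x = 2 * \<theta>"
    define m where "m = M + 1"
    have x0: "0 < x" "x < pi" using th0 th1 by (auto simp: x_def)
    have sx: "sin x = 2 * a * b / n^2" using gf(1,2) by (simp add: x_def sin_double power2_eq_square)
    have cx: "cos x = (b^2 - a^2) / n^2" using gf(1,2) by (simp add: x_def cos_double power_divide diff_divide_distrib)
    have key: "sin (2 * real m * x) \<le> real m * sin x"
    proof (cases "t \<le> u")
      case True
      have N: "real (card L) = real t + real u" using card_split[OF fin, of g] t u by simp
      have "pi / 4 * sqrt ((real t + real u) / real t0) \<le> real M"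
        unfolding M N by (rule real_nat_ceiling_ge)
      hence mge: "pi / 4 * sqrt ((real t + real u) / real t0) \<le> real m" by (simp add: m_def)
      have "(pi / 4 * sqrt ((real t + real u) / real t0))^2 \<le> (real m)^2"
        using mge by (intro power_mono) auto
      moreover have "(pi / 4 * sqrt ((real t + real u) / real t0))^2 = (pi/4)^2 * ((real t + real u) / real t0)"
      proof -
        have "(sqrt ((real t + real u) / real t0))^2 = (real t + real u) / real t0"
          by (rule real_sqrt_pow2) simp
        thus ?thesis by (simp only: power_mult_distrib)
      qed
      ultimately have m2: "(pi/4)^2 * ((real t + real u) / real t0) \<le> (real m)^2"
        by linarith
      have "(real t + real u) / real t \<le> (real t + real u) / real t0"
        using t0 by (intro divide_left_mono) auto
      hence m2': "(pi/4)^2 * ((real t + real u) / real t) \<le> (real m)^2"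
      proof -
        have "(pi/4)^2 * ((real t + real u) / real t) \<le> (pi/4)^2 * ((real t + real u) / real t0)"
          using \<open>(real t + real u) / real t \<le> (real t + real u) / real t0\<close> by (rule mult_left_mono) simp
        thus ?thesis using m2 by linarith
      qed
      have "(real t + real u)^2 \<le> (pi^2 / 8) * (real t + real u)^2"
      proof -
        have "pi^2 \<ge> 3^2" using pi_gt3 by (intro power_mono) auto
        hence "1 \<le> pi^2 / 8" by simp
        hence "1 * (real t + real u)^2 \<le> (pi^2 / 8) * (real t + real u)^2"
          by (intro mult_right_mono) auto
        thus ?thesis by simp
      qed
      also have "\<dots> \<le> 4 * ((pi/4)^2 * ((real t + real u) / real t)) * real t * real u"
      proof -
        have "(pi^2 / 8) * (real t + real u)^2 = 4 * ((pi/4)^2 * ((real t + real u) / real t)) * real t * ((real t + real u)/2)"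
          using tpos by (simp add: field_simps power2_eq_square)
        also have "\<dots> \<le> 4 * ((pi/4)^2 * ((real t + real u) / real t)) * real t * real u"
          using True by (intro mult_left_mono) auto
        finally show ?thesis .
      qed
      also have "\<dots> \<le> 4 * (real m)^2 * real t * real u"
        using m2' by (intro mult_right_mono mult_left_mono) auto
      also have "\<dots> = (real m * (2 * a * b))^2"
        using a2 b2 by (simp add: power_mult_distrib)
      finally have "(n^2)^2 \<le> (real m * (2 * a * b))^2" using n2 by simp
      hence "n^2 \<le> real m * (2 * a * b)"
        by (rule power2_le_imp_le) (use apos bpos in auto)
      hence "1 \<le> real m * sin x" using npos unfolding sx by (simp add: field_simps)
      moreover have "sin (2 * real m * x) \<le> 1" by simp
      ultimately show ?thesis by linarith
    next
      case False
      have "cos x < 0" unfolding cx using False a2 b2 npos by (simp add: divide_neg_pos)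
      hence "pi/2 \<le> x" using cos_gt_zero_pi[of x] x0 by linarith
      thus ?thesis using x0 by (intro sin_ineq_big) (auto simp: m_def)
    qed
    have "(\<Sum>j<m. (cos ((2*real j+1) * (x/2)))^2) \<le> 3/4 * real m"
      using x0 key by (rule cos2_sum_le)
    moreover have "{0..M} = {..<m}" by (auto simp: m_def)
    moreover have "x / 2 = \<theta>" by (simp add: x_def)
    ultimately show ?thesis using gn False by (simp add: m_def)
  qed
qed

lemma bind_prob_le_int:
  fixes h :: "'a \<Rightarrow> real"
  assumes le: "\<And>x. x \<in> set_pmf p \<Longrightarrow> measure_pmf.prob (f x) A \<le> h x"
    and nn: "\<And>x. 0 \<le> h x" and int: "integrable (measure_pmf p) h"
  shows "measure_pmf.prob (bind_pmf p f) A \<le> (\<integral>x. h x \<partial>measure_pmf p)"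
proof -
  have "ennreal (measure_pmf.prob (bind_pmf p f) A) = emeasure (measure_pmf (bind_pmf p f)) A"
    by (simp add: measure_pmf.emeasure_eq_measure)
  also have "\<dots> = (\<integral>\<^sup>+x. emeasure (measure_pmf (f x)) A \<partial>measure_pmf p)" by simp
  also have "\<dots> = (\<integral>\<^sup>+x. ennreal (measure_pmf.prob (f x) A) \<partial>measure_pmf p)"
    by (simp add: measure_pmf.emeasure_eq_measure)
  also have "\<dots> \<le> (\<integral>\<^sup>+x. ennreal (h x) \<partial>measure_pmf p)"
    by (rule nn_integral_mono_AE) (auto simp: AE_measure_pmf_iff intro!: ennreal_leI le)
  also have "\<dots> = ennreal (\<integral>x. h x \<partial>measure_pmf p)"
    using int nn by (intro nn_integral_eq_integral) auto
  finally show ?thesis using nn by (simp add: integral_nonneg_AE ennreal_le_iff)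
qed

lemma bind_prob_le:
  assumes c: "c \<ge> 0"
    and out: "\<And>x. x \<in> set_pmf p \<Longrightarrow> x \<notin> B \<Longrightarrow> measure_pmf.prob (f x) A = 0"
    and inn: "\<And>x. x \<in> set_pmf p \<Longrightarrow> x \<in> B \<Longrightarrow> measure_pmf.prob (f x) A \<le> c"
  shows "measure_pmf.prob (bind_pmf p f) A \<le> c * measure_pmf.prob p B"
proof -
  have "measure_pmf.prob (bind_pmf p f) A \<le> (\<integral>x. c * indicator B x \<partial>measure_pmf p)"
  proof (rule bind_prob_le_int)
    fix x assume "x \<in> set_pmf p"
    thus "measure_pmf.prob (f x) A \<le> c * indicator B x"
      using out inn by (cases "x \<in> B") auto
  next
    show "\<And>x. 0 \<le> c * indicator B x" using c by simp
    show "integrable (measure_pmf p) (\<lambda>x. c * indicator B x)"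
      by (intro integrable_mult_right integrable_real_indicator) (simp_all add: measure_pmf.emeasure_finite less_top[symmetric])
  qed
  also have "\<dots> = c * measure_pmf.prob p B" by simp
  finally show ?thesis .
qed

lemma grover_run_set:
  assumes "(r, c) \<in> set_pmf (grover_run L g j)"
  shows "(\<forall>x. r = Some x \<longrightarrow> x \<in> L \<and> g x) \<and> c = real j + 1"
  using assms by (auto simp: grover_run_def split: if_splits)

lemma add_cost_vimage: "add_cost c -` {(r, c'). r = None} = {(r, c'). r = None}"
  by (auto simp: add_cost_def)

lemma add_cost_vimage2: "{y. case add_cost b y of (r, c) \<Rightarrow> r = None} = {(r, c). r = None}"
  by (auto simp: add_cost_def)

lemma step2_fail:
  fixes L g t0
  defines "M \<equiv> nat \<lceil>pi / 4 * sqrt (real (card L) / real t0)\<rceil>"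
  assumes avg: "(\<Sum>j\<in>{0..M}. measure_pmf.prob (grover_run L g j) {(r,c). r = None}) \<le> 3/4 * real (M+1)"
  shows "measure_pmf.prob (zalka_step2 L g t0 k) {(r,c). r = None} \<le> (3/4)^k"
proof (induction k)
  case 0 thus ?case by simp
next
  case (Suc k)
  define q where "q = (\<lambda>j. measure_pmf.prob (grover_run L g j) {(r,c). r = None})"
  have fin: "finite {0..M}" "{0..M} \<noteq> {}" by auto
  have "measure_pmf.prob (zalka_step2 L g t0 (Suc k)) {(r,c). r = None}
      \<le> (\<integral>j. (3/4)^k * q j \<partial>measure_pmf (pmf_of_set {0..M}))"
    unfolding zalka_step2.simps M_def[symmetric]
  proof (rule bind_prob_le_int)
    fix j assume "j \<in> set_pmf (pmf_of_set {0..M})"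
    show "measure_pmf.prob (grover_run L g j \<bind> (\<lambda>(r, c). if r \<noteq> None then return_pmf (r, c)
            else map_pmf (add_cost c) (zalka_step2 L g t0 k))) {(r,c). r = None} \<le> (3/4)^k * q j"
      unfolding q_def
    proof (rule bind_prob_le)
      fix x assume "x \<in> set_pmf (grover_run L g j)" "x \<notin> {(r,c). r = None}"
      thus "measure_pmf.prob ((\<lambda>(r, c). if r \<noteq> None then return_pmf (r, c)
            else map_pmf (add_cost c) (zalka_step2 L g t0 k)) x) {(r,c). r = None} = 0"
        by (cases x) auto
    next
      fix x assume "x \<in> set_pmf (grover_run L g j)" "x \<in> {(r,c). r = None}"
      thus "measure_pmf.prob ((\<lambda>(r, c). if r \<noteq> None then return_pmf (r, c)
            else map_pmf (add_cost c) (zalka_step2 L g t0 k)) x) {(r,c). r = None} \<le> (3/4)^k"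
        using Suc.IH by (cases x) (auto simp: add_cost_vimage add_cost_vimage2)
    qed simp
  next
    show "\<And>j. 0 \<le> (3/4)^k * q j" by (simp add: q_def)
    show "integrable (measure_pmf (pmf_of_set {0..M})) (\<lambda>j. (3/4)^k * q j)"
      using fin by (intro integrable_measure_pmf_finite) simp
  qed
  also have "\<dots> = (\<Sum>j\<in>{0..M}. (3/4)^k * q j) / real (card {0..M})"
    using fin by (intro integral_pmf_of_set) auto
  also have "\<dots> = (3/4)^k * (\<Sum>j\<in>{0..M}. q j) / real (M + 1)"
  proof -
    have "(\<Sum>j\<in>{0..M}. (3/4)^k * q j) = (3/4)^k * (\<Sum>j\<in>{0..M}. q j)"
      by (rule sum_distrib_left[symmetric])
    thus ?thesis by simp
  qed
  also have "\<dots> \<le> (3/4)^k * (3/4 * real (M+1)) / real (M + 1)"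
    using avg unfolding q_def by (intro divide_right_mono mult_left_mono) auto
  also have "\<dots> = (3/4)^(Suc k)"
  proof -
    have Xp: "real (M+1) \<noteq> 0" by simp
    have "(3/4::real)^k * (3/4 * real (M+1)) / real (M + 1) = ((3/4)^k * 3/4) * real (M+1) / real (M + 1)"
      by (simp only: mult.assoc times_divide_eq_right)
    also have "\<dots> = (3/4)^k * 3/4" using Xp by (rule nonzero_mult_div_cancel_right)
    finally show ?thesis by (simp only: power_Suc2 times_divide_eq_right)
  qed
  finally show ?case .
qed

lemma step2_sound:
  fixes L g t0
  defines "M \<equiv> nat \<lceil>pi / 4 * sqrt (real (card L) / real t0)\<rceil>"
  shows "(r, c) \<in> set_pmf (zalka_step2 L g t0 k) \<Longrightarrow>
     (\<forall>x. r = Some x \<longrightarrow> x \<in> L \<and> g x) \<and> 0 \<le> c \<and> c \<le> real k * (real M + 1)"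
proof (induction k arbitrary: r c)
  case 0 thus ?case by simp
next
  case (Suc k)
  have fin: "finite {0..M}" "{0..M} \<noteq> {}" by auto
  from Suc.prems obtain j r' c' where j: "j \<in> {0..M}" and rc': "(r', c') \<in> set_pmf (grover_run L g j)"
    and rc: "(r, c) \<in> set_pmf (if r' \<noteq> None then return_pmf (r', c')
            else map_pmf (add_cost c') (zalka_step2 L g t0 k))"
    unfolding zalka_step2.simps M_def[symmetric] using fin by (auto simp: set_pmf_of_set)
  note g = grover_run_set[OF rc']
  have jM: "real j \<le> real M" using j by simp
  show ?case
  proof (cases "r' \<noteq> None")
    case True
    have "0 \<le> real k * (real M + 1)" by simp
    hence "real M + 1 \<le> real (Suc k) * (real M + 1)" by (simp add: algebra_simps)
    hence "real j + 1 \<le> real (Suc k) * (real M + 1)" using jM by linarith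
    thus ?thesis using rc g True by (auto simp del: of_nat_Suc)
  next
    case False
    then obtain c'' where "(r, c'') \<in> set_pmf (zalka_step2 L g t0 k)" "c = c' + c''"
      using rc by (auto simp: add_cost_def)
    thus ?thesis using Suc.IH g jM by (fastforce simp: algebra_simps)
  qed
qed

lemma exact_cost_nonneg: "exact_cost L t \<ge> 0"
proof -
  have "real_of_int (round (pi / 4 * sqrt (real (card L) / real t) - 1 / 2))
        \<ge> pi / 4 * sqrt (real (card L) / real t) - 1 / 2 - 1/2" by (rule of_int_round_ge)
  moreover have "pi / 4 * sqrt (real (card L) / real t) \<ge> 0" by simp
  ultimately show ?thesis unfolding exact_cost_def by linarith
qed

lemma exact_cost_le: "exact_cost L t \<le> pi / 4 * sqrt (real (card L) / real t) + 1"
proof -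
  have "real_of_int (round (pi / 4 * sqrt (real (card L) / real t) - 1 / 2))
        \<le> pi / 4 * sqrt (real (card L) / real t) - 1 / 2 + 1/2" by (rule of_int_round_le)
  thus ?thesis unfolding exact_cost_def by linarith
qed

lemma step1_sound:
  assumes rest: "\<And>r c. (r, c) \<in> set_pmf rest \<Longrightarrow> (\<forall>x. r = Some x \<longrightarrow> x \<in> L \<and> g x) \<and> 0 \<le> c \<and> c \<le> B"
    and B: "B \<ge> 0"
  shows "(r, c) \<in> set_pmf (zalka_step1 EG L g ts rest) \<Longrightarrow>
     (\<forall>x. r = Some x \<longrightarrow> x \<in> L \<and> g x) \<and> 0 \<le> c \<and> c \<le> sum_list (map (exact_cost L) ts) + B"
proof (induction ts arbitrary: r c)
  case Nil thus ?case using rest by simp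
next
  case (Cons t ts)
  have sl: "sum_list (map (exact_cost L) ts) \<ge> 0"
    by (rule sum_list_nonneg) (auto simp: exact_cost_nonneg)
  have ec: "exact_cost L t \<ge> 0" by (rule exact_cost_nonneg)
  from Cons.prems obtain x where x: "x \<in> set_pmf (EG t)" and
    rc: "(r, c) \<in> set_pmf (if x \<in> L \<and> g x then return_pmf (Some x, exact_cost L t)
       else map_pmf (add_cost (exact_cost L t)) (zalka_step1 EG L g ts rest))"
    by auto
  show ?case
  proof (cases "x \<in> L \<and> g x")
    case True
    thus ?thesis using rc sl ec B by auto
  next
    case False
    then obtain c'' where "(r, c'') \<in> set_pmf (zalka_step1 EG L g ts rest)" "c = exact_cost L t + c''"
      using rc by (auto simp: add_cost_def)
    thus ?thesis using Cons.IH ec by fastforce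
  qed
qed

lemma step1_found:
  assumes "t \<in> set ts" and EGt: "\<forall>x \<in> set_pmf (EG t). x \<in> L \<and> g x"
  shows "(r, c) \<in> set_pmf (zalka_step1 EG L g ts rest) \<Longrightarrow> r \<noteq> None"
  using assms(1)
proof (induction ts arbitrary: r c)
  case Nil thus ?case by simp
next
  case (Cons t' ts)
  from Cons.prems(1) obtain x where x: "x \<in> set_pmf (EG t')" and
    rc: "(r, c) \<in> set_pmf (if x \<in> L \<and> g x then return_pmf (Some x, exact_cost L t')
       else map_pmf (add_cost (exact_cost L t')) (zalka_step1 EG L g ts rest))"
    by auto
  show ?case
  proof (cases "x \<in> L \<and> g x")
    case True
    thus ?thesis using rc by auto
  next
    case False
    hence "t' \<noteq> t" using EGt x by auto
    hence "t \<in> set ts" using Cons.prems(2) by simp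
    moreover obtain c'' where "(r, c'') \<in> set_pmf (zalka_step1 EG L g ts rest)"
      using rc False by (auto simp: add_cost_def)
    ultimately show ?thesis using Cons.IH by blast
  qed
qed

lemma step1_fail:
  "measure_pmf.prob (zalka_step1 EG L g ts rest) {(r,c). r = None}
     \<le> measure_pmf.prob rest {(r,c). r = None}"
proof (induction ts)
  case Nil thus ?case by simp
next
  case (Cons t ts)
  have "measure_pmf.prob (zalka_step1 EG L g (t # ts) rest) {(r,c). r = None}
     \<le> measure_pmf.prob rest {(r,c). r = None} * measure_pmf.prob (EG t) UNIV"
    unfolding zalka_step1.simps
  proof (rule bind_prob_le)
    fix x assume "x \<in> set_pmf (EG t)" "x \<in> UNIV"
    show "measure_pmf.prob (if x \<in> L \<and> g x then return_pmf (Some x, exact_cost L t)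
       else map_pmf (add_cost (exact_cost L t)) (zalka_step1 EG L g ts rest)) {(r,c). r = None}
       \<le> measure_pmf.prob rest {(r,c). r = None}"
      using Cons.IH by (auto simp: add_cost_vimage add_cost_vimage2)
  qed auto
  thus ?case by simp
qed

lemma inv_sqrt_sum: "(\<Sum>t\<in>{1..T}. 1 / sqrt (real t)) \<le> 2 * sqrt (real T)"
proof (induction T)
  case 0 thus ?case by simp
next
  case (Suc T)
  define s where "s = sqrt (real T)"
  define s1 where "s1 = sqrt (real T + 1)"
  have s0: "s \<ge> 0" by (simp add: s_def)
  have s1p: "s1 > 0" by (simp add: s1_def)
  have ss: "s^2 = real T" "s1^2 = real T + 1" by (simp_all add: s_def s1_def)
  have "0 \<le> (s1 - s)^2" by simp
  hence "2 * s * s1 \<le> s^2 + s1^2" by (simp add: power2_eq_square algebra_simps)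
  hence "2 * s * s1 + 1 \<le> 2 * s1^2" using ss by simp
  hence "(2 * s * s1 + 1) / s1 \<le> 2 * s1^2 / s1" using s1p by (intro divide_right_mono) auto
  hence key: "2 * s + 1 / s1 \<le> 2 * s1" using s1p by (simp add: field_simps power2_eq_square)
  have "(\<Sum>t\<in>{1..Suc T}. 1 / sqrt (real t)) = (\<Sum>t\<in>{1..T}. 1 / sqrt (real t)) + 1 / s1"
    by (simp add: s1_def add.commute)
  also have "\<dots> \<le> 2 * s + 1 / s1" using Suc.IH by (simp add: s_def)
  also have "\<dots> \<le> 2 * s1" by (rule key)
  finally show ?case by (simp add: s1_def add.commute)
qed

lemma step1_cost_bound:
  "sum_list (map (exact_cost L) [1..<t0+1]) \<le> pi / 2 * sqrt (real (card L)) * sqrt (real t0) + real t0"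
proof -
  have "sum_list (map (exact_cost L) [1..<t0+1]) = (\<Sum>t\<in>{1..t0}. exact_cost L t)"
  proof -
    have "set [1..<t0+1] = {1..t0}" by auto
    thus ?thesis by (simp only: interv_sum_list_conv_sum_set_nat)
  qed
  also have "\<dots> \<le> (\<Sum>t\<in>{1..t0}. pi / 4 * sqrt (real (card L)) * (1 / sqrt (real t)) + 1)"
  proof (intro sum_mono)
    fix t assume "t \<in> {1..t0}"
    have "exact_cost L t \<le> pi / 4 * sqrt (real (card L) / real t) + 1" by (rule exact_cost_le)
    also have "sqrt (real (card L) / real t) = sqrt (real (card L)) * (1 / sqrt (real t))"
      by (simp add: real_sqrt_divide)
    finally show "exact_cost L t \<le> pi / 4 * sqrt (real (card L)) * (1 / sqrt (real t)) + 1"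
      by (simp add: mult.assoc)
  qed
  also have "\<dots> = pi / 4 * sqrt (real (card L)) * (\<Sum>t\<in>{1..t0}. 1 / sqrt (real t)) + real t0"
    by (simp add: sum.distrib sum_distrib_left)
  also have "\<dots> \<le> pi / 4 * sqrt (real (card L)) * (2 * sqrt (real t0)) + real t0"
    by (intro add_right_mono mult_left_mono inv_sqrt_sum) auto
  also have "pi / 4 * sqrt (real (card L)) * (2 * sqrt (real t0)) + real t0
     = pi / 2 * sqrt (real (card L)) * sqrt (real t0) + real t0" by simp
  finally show ?thesis .
qed

lemma step2_cost_bound:
  fixes t0 N :: nat
  defines "M \<equiv> nat \<lceil>pi / 4 * sqrt (real N / real t0)\<rceil>"
  shows "real (2 * t0) * (real M + 1) \<le> pi / 2 * sqrt (real N) * sqrt (real t0) + 4 * real t0"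
proof -
  have "real M \<le> pi / 4 * sqrt (real N / real t0) + 1"
  proof -
    have "pi / 4 * sqrt (real N / real t0) \<ge> 0" by simp
    hence "real M = real_of_int \<lceil>pi / 4 * sqrt (real N / real t0)\<rceil>" unfolding M_def by simp
    also have "\<dots> \<le> pi / 4 * sqrt (real N / real t0) + 1" by simp
    finally show ?thesis .
  qed
  hence "real (2 * t0) * (real M + 1) \<le> real (2 * t0) * (pi / 4 * sqrt (real N / real t0) + 2)"
    by (intro mult_left_mono) auto
  also have "\<dots> = pi / 2 * sqrt (real N) * (real t0 / sqrt (real t0)) + 4 * real t0"
    by (simp add: real_sqrt_divide field_simps)
  also have "real t0 / sqrt (real t0) = sqrt (real t0)" by (simp add: real_div_sqrt)
  finally show ?thesis .
qed

lemma T_eq: "real (nat \<lceil>ln (1 / \<epsilon>) / (2 * ln (4 / 3))\<rceil>) = real (zalka_t0 \<epsilon>)"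
proof -
  have "ln (4/3::real) = - ln (3/4)" by (simp add: ln_div)
  moreover have "ln (1 / \<epsilon>) = - ln \<epsilon>" by (simp add: ln_div)
  ultimately have "ln (1 / \<epsilon>) / (2 * ln (4 / 3)) = ln \<epsilon> / (2 * ln (3 / 4))" by simp
  thus ?thesis by (simp add: zalka_t0_def)
qed

lemma eps_bound:
  assumes "0 < \<epsilon>" "\<epsilon> < 1"
  shows "zalka_t0 \<epsilon> \<ge> 1" "(3/4::real)^(2 * zalka_t0 \<epsilon>) \<le> \<epsilon>"
proof -
  define x where "x = ln \<epsilon> / (2 * ln (3/4::real))"
  have l34: "ln (3/4::real) < 0" by simp
  have le: "ln \<epsilon> < 0" using assms by simp
  have x0: "x > 0" unfolding x_def using l34 le by (simp add: divide_neg_neg)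
  have t0x: "real (zalka_t0 \<epsilon>) \<ge> x" unfolding zalka_t0_def x_def[symmetric] by (rule real_nat_ceiling_ge)
  show "zalka_t0 \<epsilon> \<ge> 1" using x0 unfolding zalka_t0_def x_def[symmetric] by linarith
  have "(3/4::real)^(2 * zalka_t0 \<epsilon>) = exp (ln ((3/4)^(2 * zalka_t0 \<epsilon>)))" by simp
  also have "\<dots> = exp (real (2 * zalka_t0 \<epsilon>) * ln (3/4))" by (simp only: ln_realpow)
  also have "\<dots> \<le> exp ((2 * x) * ln (3/4))"
    using t0x l34 by (intro exp_mono mult_right_mono_neg) auto
  also have "(2 * x) * ln (3/4) = ln \<epsilon>" unfolding x_def using l34 by simp
  also have "exp (ln \<epsilon>) = \<epsilon>" using assms by simp
  finally show "(3/4::real)^(2 * zalka_t0 \<epsilon>) \<le> \<epsilon>" .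
qed

theorem lemma5:
  fixes L :: "'a set" and g :: "'a \<Rightarrow> bool" and \<epsilon> :: real and c_q :: real
    and EG :: "nat \<Rightarrow> 'a pmf"
  assumes "finite L" and "\<epsilon> > 0" and "c_q \<ge> 0"
    and exact_grover: "\<And>t. t > 0 \<Longrightarrow> card {x \<in> L. g x} = t \<Longrightarrow>
                          \<forall>x \<in> set_pmf (EG t). x \<in> L \<and> g x"
  shows "(\<forall>(r, c) \<in> set_pmf (qsearch_zalka EG L g \<epsilon>). c_q * c \<le> W_zalka c_q (card L) \<epsilon>)
       \<and> measure_pmf.prob (qsearch_zalka EG L g \<epsilon>)
           {(r, c). \<not> search_correct L g r} \<le> \<epsilon>"
proof -
  note fin = assms(1)
  define t0 where "t0 = zalka_t0 \<epsilon>"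
  define M where "M = nat \<lceil>pi / 4 * sqrt (real (card L) / real t0)\<rceil>"
  define rest where "rest = zalka_step2 L g t0 (2 * t0)"
  define ts where "ts = [1..<t0+1]"
  have Q: "qsearch_zalka EG L g \<epsilon> = zalka_step1 EG L g ts rest"
    unfolding qsearch_zalka_def Let_def t0_def rest_def ts_def ..
  define B where "B = real (2 * t0) * (real M + 1)"
  have B0: "B \<ge> 0" by (simp add: B_def)
  have restS: "(\<forall>x. r = Some x \<longrightarrow> x \<in> L \<and> g x) \<and> 0 \<le> c \<and> c \<le> B"
    if "(r, c) \<in> set_pmf rest" for r c
    using step2_sound[of r c L g t0 "2 * t0"] that unfolding rest_def B_def M_def by simp
  have allS: "(\<forall>x. r = Some x \<longrightarrow> x \<in> L \<and> g x) \<and> 0 \<le> c \<and> c \<le> sum_list (map (exact_cost L) ts) + B"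
    if "(r, c) \<in> set_pmf (qsearch_zalka EG L g \<epsilon>)" for r c
    using step1_sound[of rest L g B, OF restS B0] that unfolding Q by blast
  have cost: "c_q * c \<le> W_zalka c_q (card L) \<epsilon>"
    if "(r, c) \<in> set_pmf (qsearch_zalka EG L g \<epsilon>)" for r c
  proof -
    have "c \<le> sum_list (map (exact_cost L) ts) + B" using allS[OF that] by blast
    also have "\<dots> \<le> (pi / 2 * sqrt (real (card L)) * sqrt (real t0) + real t0)
                 + (pi / 2 * sqrt (real (card L)) * sqrt (real t0) + 4 * real t0)"
      unfolding ts_def B_def M_def by (intro add_mono step1_cost_bound step2_cost_bound)
    also have "\<dots> = 5 * real t0 + pi * sqrt (real (card L)) * sqrt (real t0)" by simp
    finally have "c_q * c \<le> c_q * (5 * real t0 + pi * sqrt (real (card L)) * sqrt (real t0))"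
      using assms(3) by (rule mult_left_mono)
    thus ?thesis unfolding W_zalka_def Let_def T_eq t0_def .
  qed
  let ?P = "measure_pmf.prob (qsearch_zalka EG L g \<epsilon>) {(r, c). \<not> search_correct L g r}"
  have prob: "?P \<le> \<epsilon>"
  proof (cases "\<exists>x\<in>L. g x")
    case False
    have "?P = 0"
      unfolding measure_pmf_zero_iff
    proof (rule equals0I)
      fix y assume y: "y \<in> set_pmf (qsearch_zalka EG L g \<epsilon>) \<inter> {(r, c). \<not> search_correct L g r}"
      obtain r c where yrc: "y = (r, c)" by (cases y)
      show False using allS[of r c] y yrc False by (cases r) (auto simp: search_correct_def)
    qed
    thus ?thesis using assms(2) by simp
  next
    case True
    define t where "t = card {x\<in>L. g x}"
    have tpos: "t > 0" using True fin unfolding t_def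
      by (subst card_gt_0_iff) auto
    have sub: "{(r, c). \<not> search_correct L g r} \<inter> set_pmf (qsearch_zalka EG L g \<epsilon>) \<subseteq> {(r, c). r = None}"
    proof (rule subsetI)
      fix y assume y: "y \<in> {(r, c). \<not> search_correct L g r} \<inter> set_pmf (qsearch_zalka EG L g \<epsilon>)"
      obtain r c where yrc: "y = (r, c)" by (cases y)
      have "(\<forall>x. r = Some x \<longrightarrow> x \<in> L \<and> g x)" using allS[of r c] y yrc by simp
      moreover have "\<not> search_correct L g r" using y yrc by simp
      ultimately have "r = None" using True by (cases r) (auto simp: search_correct_def)
      thus "y \<in> {(r, c). r = None}" using yrc by simp
    qed
    have PN: "?P \<le> measure_pmf.prob (qsearch_zalka EG L g \<epsilon>) {(r, c). r = None}"
    proof -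
      have "?P = measure_pmf.prob (qsearch_zalka EG L g \<epsilon>) ({(r, c). \<not> search_correct L g r} \<inter> set_pmf (qsearch_zalka EG L g \<epsilon>))"
        by (simp add: measure_Int_set_pmf)
      also have "\<dots> \<le> measure_pmf.prob (qsearch_zalka EG L g \<epsilon>) {(r, c). r = None}"
        using sub by (intro measure_pmf.finite_measure_mono) auto
      finally show ?thesis .
    qed
    show ?thesis
    proof (cases "t \<le> t0")
      case True
      have tin: "t \<in> set ts" unfolding ts_def set_upt using tpos True by simp
      have ct: "card {x\<in>L. g x} = t" by (simp add: t_def)
      have EGt: "\<forall>x \<in> set_pmf (EG t). x \<in> L \<and> g x" by (rule exact_grover[OF tpos ct])
      have nn: "r \<noteq> None" if rc: "(r, c) \<in> set_pmf (qsearch_zalka EG L g \<epsilon>)" for r c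
      proof -
        have rc': "(r, c) \<in> set_pmf (zalka_step1 EG L g ts rest)" using rc unfolding Q .
        show ?thesis by (rule step1_found[where t=t and ts=ts and EG=EG and L=L and g=g and rest=rest, OF tin EGt rc'])
      qed
      have "set_pmf (qsearch_zalka EG L g \<epsilon>) \<inter> {(r, c). r = None} = {}"
      proof (rule equals0I)
        fix y assume y: "y \<in> set_pmf (qsearch_zalka EG L g \<epsilon>) \<inter> {(r, c). r = None}"
        obtain r c where yrc: "y = (r, c)" by (cases y)
        have "(r, c) \<in> set_pmf (qsearch_zalka EG L g \<epsilon>)" "r = None" using y yrc by auto
        thus False using nn by blast
      qed
      hence "measure_pmf.prob (qsearch_zalka EG L g \<epsilon>) {(r, c). r = None} = 0"
        unfolding measure_pmf_zero_iff .
      thus ?thesis using PN assms(2) by simp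
    next
      case False
      show ?thesis
      proof (cases "\<epsilon> < 1")
        case False
        have "?P \<le> 1" by simp
        thus ?thesis using False by linarith
      next
        case True
        have t01: "t0 \<ge> 1" unfolding t0_def using eps_bound assms(2) True by blast
        have avg: "(\<Sum>j\<in>{0..M}. measure_pmf.prob (grover_run L g j) {(r,c). r = None}) \<le> 3/4 * real (M+1)"
        proof -
          have tlt: "t0 < t" using \<open>\<not> t \<le> t0\<close> by simp
          show ?thesis by (rule avg_none[OF fin t_def refl t01 tlt M_def])
        qed
        have "?P \<le> measure_pmf.prob (qsearch_zalka EG L g \<epsilon>) {(r, c). r = None}" by (rule PN)
        also have "\<dots> \<le> measure_pmf.prob rest {(r, c). r = None}" unfolding Q by (rule step1_fail)
        also have "\<dots> \<le> (3/4)^(2 * t0)" unfolding rest_def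
          by (rule step2_fail[OF avg[unfolded M_def]])
        also have "\<dots> \<le> \<epsilon>" unfolding t0_def using eps_bound assms(2) True by blast
        finally show ?thesis .
      qed
    qed
  qed
  show ?thesis using cost prob by auto
qed

end
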